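(* Let $n\ge2$. The word $K_n$ has exactly $2\cdot4^{n-2}-1$ letters, and its letter in position $j$ ($1\le j\le 2\cdot 4^{n-2}-1$) is: (a) $P$ exactly when $j=2k-1$, $k=1,\dots,4^{n-2}$; (b) $T$ exactly when $j=4^{2l-1}(2k-1)$ with $l=1,\dots,\lfloor\frac{n-1}{2}\rfloor$, $k=1,\dots,4^{\,n-2l-1}$; (c) $V$ exactly when $j=4^{2l}(2k-1)$ with $l=1,\dots,\lfloor\frac{n-2}{2}\rfloor$, $k=1,\dots,4^{\,n-2l-2}$; (d) $S$ exactly when $j=4^{2l-2}(8k-6)$ with $l=1,\dots,\lfloor\frac{n-1}{2}\rfloor$, $k=1,\dots,4^{\,n-2l-1}$, or $j=4^{2l-1}(8k-2)$ with $l=1,\dots,\lfloor\frac{n-2}{2}\rfloor$, $k=1,\dots,4^{\,n-2l-2}$; (e) $U$ exactly when $j=4^{2l-2}(8k-2)$ with $l=1,\dots,\lfloor\frac{n-1}{2}\rfloor$, $k=1,\dots,4^{\,n-2l-1}$, or $j=4^{2l-1}(8k-6)$ with $l=1,\dots,\lfloor\frac{n-2}{2}\rfloor$, $k=1,\dots,4^{\,n-2l-2}$. Moreover, if $n=2m$ then $K_n$ contains $4^{2m-2}$ letters $P$, $\frac{4^{2m-2}-1}{15}$ letters $V$, $\frac{4^{2m-1}-4}{15}$ letters $T$, $\frac{4^{2m-2}-1}{3}$ letters $S$ and $\frac{4^{2m-2}-1}{3}$ letters $U$; if $n=2m+1$ then it contains $4^{2m-1}$ letters $P$, $\frac{4^{2m-1}-4}{15}$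 letters $V$, $\frac{4^{2m}-1}{15}$ letters $T$, $\frac{4^{2m-1}-1}{3}$ letters $S$ and $\frac{4^{2m-1}-1}{3}$ letters $U$.
   Context: Words $K_n$ ($n\ge2$) over the alphabet $\{P,S,T,U,V\}$ are defined by $K_2=P$; $K_{2m+1}=K_{2m}\,S\,K_{2m}\,T\,K_{2m}\,U\,K_{2m}$ for $m\ge1$; $K_{2m}=K_{2m-1}\,U\,K_{2m-1}\,V\,K_{2m-1}\,S\,K_{2m-1}$ for $m\ge2$ (juxtaposition is concatenation; e.g. $K_3=PSPTPUP$). (In the paper these letters encode blocks of affine curvatures of the Hilbert curve: $P=(-2,1,\tfrac12,-1,1,-1,2,1,-\tfrac12)$, $S=(2,1,-\tfrac12,1)$, $T=(3,1,\tfrac13)$, $U=(1,-2,1,\tfrac12)$, $V=(1,-1,1,-1,1)$, and the curvature sequence of the Hilbert curve at step $n$ is $1,K_n,1$.) $\lfloor x\rfloor$ denotes the greatest integer $\le x$. *)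

theory Defs
  imports Complex_Main
begin

datatype letter = P | S | T | U | V

text \<open>Kw i is the word K_(i+2): Kw 0 = K_2 = P; K_(2m+1) is built from K_(2m)
  using S,T,U (index i = 2m-2 even), K_(2m) from K_(2m-1) using U,V,S (i odd).\<close>
primrec Kw :: "nat \<Rightarrow> letter list" where
  "Kw 0 = [P]"
| "Kw (Suc i) = (let w = Kw i in
     if even i then w @ S # w @ T # w @ U # w
     else w @ U # w @ V # w @ S # w)"

definition K :: "nat \<Rightarrow> letter list" where
  "K n = Kw (n - 2)"

end

theory Submission
  imports Defs
begin


function Lt :: "bool \<Rightarrow> nat \<Rightarrow> letter" where
  "Lt b j = (if j = 0 \<or> odd j then P
     else if j mod 4 = 2 then (if (j mod 8 = 2) \<noteq> b then S else U)
     else if odd (j div 4) then (if b then V else T)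
     else Lt (\<not> b) (j div 4))"
  by auto
termination by (relation "measure snd") auto

declare Lt.simps[simp del]

lemma len_Kw: "length (Kw i) = 2 * 4 ^ i - 1"
proof (induction i)
  case 0 then show ?case by simp
next
  case (Suc i)
  have "(4::nat) ^ i \<ge> 1" by simp
  with Suc show ?case by (simp add: Let_def)
qed

lemma Lt_odd: "odd j \<Longrightarrow> Lt b j = P"
  by (subst Lt.simps) auto

lemma Lt_per: "0 < r \<Longrightarrow> r < 2 * 4 ^ i \<Longrightarrow> Lt b (2 * 4 ^ i * c + r) = Lt b r"
proof (induction i arbitrary: b r c)
  case 0
  then have "r = 1" by simp
  then show ?case by (simp add: Lt_odd)
next
  case (Suc i)
  have e8: "(2 * 4 ^ Suc i * c) mod 8 = 0" by simp
  show ?case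
  proof (cases "odd r")
    case True then show ?thesis by (simp add: Lt_odd)
  next
    case False
    have ev: "even (2 * 4 ^ Suc i * c + r)" using False by simp
    have xe: "2 * 4 ^ Suc i * c = 8 * (4 ^ i * c)" by simp
    have m8: "(2 * 4 ^ Suc i * c + r) mod 8 = r mod 8" unfolding xe by presburger
    have m4: "(2 * 4 ^ Suc i * c + r) mod 4 = r mod 4" unfolding xe by presburger
    have d4: "(2 * 4 ^ Suc i * c + r) div 4 = 2 * (4 ^ i * c) + r div 4" unfolding xe by presburger
    show ?thesis
    proof (cases "r mod 4 = 2")
      case True
      then show ?thesis using False ev m8 m4 Suc.prems by (subst (1 2) Lt.simps) auto
    next
      case F2: False
      have "0 < r div 4" using Suc.prems False F2 by presburger
      moreover have "r div 4 < 2 * 4 ^ i" using Suc.prems by simp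
      ultimately have IH: "Lt (\<not>b) (2 * (4 ^ i * c) + r div 4) = Lt (\<not>b) (r div 4)" using Suc.IH by (metis mult.assoc)
      show ?thesis using False ev m4 d4 F2 Suc.prems IH
        apply (subst (1 2) Lt.simps) by auto
    qed
  qed
qed

lemma Lt_sep1: "Lt b (2 * 4 ^ i) = (if even i \<noteq> b then S else U)"
proof (induction i arbitrary: b)
  case 0 then show ?case by (subst Lt.simps) auto
next
  case (Suc i)
  have "2 * 4 ^ Suc i = 4 * (2 * 4 ^ i::nat)" by simp
  then show ?case using Suc.IH[of "\<not> b"] by (subst Lt.simps) auto
qed

lemma Lt_sep2: "Lt b (4 * 4 ^ i) = (if even i \<noteq> b then T else V)"
proof (induction i arbitrary: b)
  case 0 then show ?case by (subst Lt.simps) auto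
next
  case (Suc i)
  have "4 * 4 ^ Suc i = 4 * (4 * 4 ^ i::nat)" by simp
  then show ?case using Suc.IH[of "\<not> b"] by (subst Lt.simps) auto
qed

lemma Lt_sep3: "Lt b (6 * 4 ^ i) = (if even i \<noteq> b then U else S)"
proof (induction i arbitrary: b)
  case 0 then show ?case by (subst Lt.simps) auto
next
  case (Suc i)
  have "6 * 4 ^ Suc i = 4 * (6 * 4 ^ i::nat)" by simp
  then show ?case using Suc.IH[of "\<not> b"] by (subst Lt.simps) auto
qed

lemma nth_app_Cons: "(w @ x # v) ! p = (if p < length w then w ! p else if p = length w then x else v ! (p - length w - 1))"
  by (simp add: nth_append nth_Cons')

lemma Kw_nth: "p < length (Kw i) \<Longrightarrow> Kw i ! p = Lt False (p + 1)"
proof (induction i arbitrary: p)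
  case 0 then show ?case by (simp add: Lt_odd)
next
  case (Suc i)
  define w where "w = Kw i"
  define L :: nat where "L = 2 * 4 ^ i - 1"
  have lw: "length w = L" unfolding w_def L_def by (simp add: len_Kw)
  have L1: "L + 1 = 2 * 4 ^ i" unfolding L_def by simp
  have IH: "\<And>q. q < L \<Longrightarrow> w ! q = Lt False (2 * 4 ^ i * c + (q + 1))" for c
    using Suc.IH lw Lt_per[of "q+1" i False c for q] L1 unfolding w_def by (metis add_pos_nonneg less_add_one order_less_le_trans zero_less_one le_add2 add_less_cancel_right)
  have pl: "p < 4 * L + 3" using Suc.prems lw unfolding w_def by (simp add: Let_def split: if_splits)
  have K: "Kw (Suc i) = (if even i then w @ S # w @ T # w @ U # w else w @ U # w @ V # w @ S # w)"
    unfolding w_def by (simp add: Let_def)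
  consider "p < L" | "p = L" | "L < p" "p < 2*L+1" | "p = 2 * L + 1" | "2*L+1 < p" "p < 3*L+2" | "p = 3*L+2" | "3*L+2 < p" "p < 4*L+3"
    using pl by linarith
  then show ?case
  proof cases
    case 1 then show ?thesis using IH[of p 0] K lw by (simp add: nth_app_Cons)
  next
    case 2 then show ?thesis using K lw L1 Lt_sep1[of False i] by (simp add: nth_app_Cons)
  next
    case 3 
    have "p - L - 1 < L" using 3 by linarith
    moreover have "2 * 4 ^ i * 1 + (p - L - 1 + 1) = p + 1" using 3 L1 by linarith
    ultimately show ?thesis using IH[of "p - L - 1" 1] K lw 3 by (simp add: nth_app_Cons)
  next
    case 4 
    have "p + 1 = 4 * 4 ^ i" using 4 L1 by linarith
    then show ?thesis using K lw 4 Lt_sep2[of False i] by (simp add: nth_app_Cons)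
  next
    case 5
    have "p - L - 1 - L - 1 < L" using 5 by linarith
    moreover have "2 * 4 ^ i * 2 + (p - L - 1 - L - 1 + 1) = p + 1" using 5 L1 by linarith
    moreover have "\<not> p < L" "p \<noteq> L" "\<not> p - L - 1 < L" "p - L - 1 \<noteq> L" using 5 by linarith+
    ultimately show ?thesis using IH[of "p - L - 1 - L - 1" 2] K lw by (simp add: nth_app_Cons)
  next
    case 6 
    have "p + 1 = 6 * 4 ^ i" using 6 L1 by linarith
    then show ?thesis using K lw 6 Lt_sep3[of False i] by (simp add: nth_app_Cons)
  next
    case 7
    have "p - L - 1 - L - 1 - L - 1 < L" using 7 by linarith
    moreover have "2 * 4 ^ i * 3 + (p - L - 1 - L - 1 - L - 1 + 1) = p + 1" using 7 L1 by linarith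
    moreover have "\<not> p < L" "p \<noteq> L" "\<not> p - L - 1 < L" "p - L - 1 \<noteq> L" "\<not> p - L - 1 - L - 1 < L" "p - L - 1 - L - 1 \<noteq> L" using 7 by linarith+
    ultimately show ?thesis using IH[of "p - L - 1 - L - 1 - L - 1" 3] K lw by (simp add: nth_app_Cons)
  qed
qed



lemma Lt_Tform: "odd c \<Longrightarrow> 1 \<le> a \<Longrightarrow> Lt b (4 ^ a * c) = (if odd a \<noteq> b then T else V)"
proof (induction a arbitrary: b)
  case 0 then show ?case by simp
next
  case (Suc a)
  have cp: "0 < c" using Suc.prems by (cases c) auto
  show ?case
  proof (cases "a = 0")
    case True
    have "(4 * c) mod 4 = 0" "(4 * c) div 4 = c" "4 * c \<noteq> 0" using cp by auto
    then show ?thesis using True Suc.prems by (subst Lt.simps) auto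
  next
    case False
    define x where "x = 4 ^ a * c"
    have x4: "4 ^ Suc a * c = 4 * x" unfolding x_def by simp
    have ex: "even x" using False unfolding x_def by (simp add: dvd_mult2)
    have "x \<noteq> 0" using cp unfolding x_def by auto
    then show ?thesis unfolding x4 using ex Suc.IH[of "\<not> b"] Suc.prems False unfolding x_def[symmetric]
      by (subst Lt.simps) auto
  qed
qed

lemma Lt_Sform: "1 \<le> k \<Longrightarrow> Lt b (4 ^ a * (8 * k - 6)) = (if even a \<noteq> b then S else U)"
proof (induction a arbitrary: b)
  case 0
  have e1: "8 * k - 6 = 2 + 4 * (2 * (k - 1))" "8 * k - 6 = 2 + 8 * (k - 1)" using 0 by simp_all
  have "(8 * k - 6) mod 4 = 2" unfolding e1(1) mod_mult_self2 by simp
  moreover have "(8 * k - 6) mod 8 = 2" unfolding e1(2) mod_mult_self2 by simp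
  moreover have "8 * k - 6 \<noteq> 0" "even (8 * k - 6)" using e1 by simp_all
  ultimately have "(8 * k - 6) mod 4 = 2" "(8 * k - 6) mod 8 = 2" "8 * k - 6 \<noteq> 0" "even (8 * k - 6)" by blast+
  then show ?case by (subst Lt.simps) auto
next
  case (Suc a)
  define x where "x = 4 ^ a * (8 * k - 6)"
  have x4: "4 ^ Suc a * (8 * k - 6) = 4 * x" unfolding x_def by simp
  have "8 * k \<ge> 8" using Suc.prems by simp
  then have ex: "even x" "x \<noteq> 0" unfolding x_def by auto
  then show ?case unfolding x4 using Suc.IH[of "\<not> b"] Suc.prems unfolding x_def[symmetric]
    by (subst Lt.simps) auto
qed

lemma Lt_Uform: "1 \<le> k \<Longrightarrow> Lt b (4 ^ a * (8 * k - 2)) = (if even a \<noteq> b then U else S)"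
proof (induction a arbitrary: b)
  case 0
  have e1: "8 * k - 2 = 2 + 4 * (1 + 2 * (k - 1))" "8 * k - 2 = 6 + 8 * (k - 1)" using 0 by simp_all
  have "(8 * k - 2) mod 4 = 2" "(8 * k - 2) mod 8 = 6" "8 * k - 2 \<noteq> 0" "even (8 * k - 2)"
    using e1 by (simp_all only: mod_mult_self2) simp_all
  then show ?case by (subst Lt.simps) auto
next
  case (Suc a)
  define x where "x = 4 ^ a * (8 * k - 2)"
  have x4: "4 ^ Suc a * (8 * k - 2) = 4 * x" unfolding x_def by simp
  have "8 * k \<ge> 8" using Suc.prems by simp
  then have ex: "even x" "x \<noteq> 0" unfolding x_def by auto
  then show ?case unfolding x4 using Suc.IH[of "\<not> b"] Suc.prems unfolding x_def[symmetric]
    by (subst Lt.simps) auto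
qed

lemma mod8_cases: "(m::nat) < 8 \<Longrightarrow> even m \<Longrightarrow> m \<noteq> 2 \<Longrightarrow> m \<noteq> 6 \<Longrightarrow> m mod 4 = 0"
  by presburger

lemma decomp: "0 < (j::nat) \<Longrightarrow> odd j \<or> (\<exists>a k. 1 \<le> a \<and> 1 \<le> k \<and> j = 4 ^ a * (2 * k - 1))
   \<or> (\<exists>a k. 1 \<le> k \<and> j = 4 ^ a * (8 * k - 6)) \<or> (\<exists>a k. 1 \<le> k \<and> j = 4 ^ a * (8 * k - 2))"
proof (induction j rule: less_induct)
  case (less j)
  have j8: "j = 8 * (j div 8) + j mod 8" by simp
  show ?case
  proof (cases "odd j")
    case True then show ?thesis by simp
  next
    case ev: False
    show ?thesis
    proof (cases "j mod 8 = 2")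
      case True
      have "j = 4 ^ 0 * (8 * (j div 8 + 1) - 6)" using True j8 by simp
      then show ?thesis by (metis le_add2)
    next
      case F8: False
      show ?thesis
      proof (cases "j mod 8 = 6")
        case True
        have "j = 4 ^ 0 * (8 * (j div 8 + 1) - 2)" using True j8 by simp
        then show ?thesis by (metis le_add2)
      next
        case False
        have "even (j mod 8)" using ev by (simp add: dvd_mod_iff) 
        then have "(j mod 8) mod 4 = 0" using mod8_cases[of "j mod 8"] F8 False by simp
        then have "j mod 4 = 0" by (simp add: mod_mod_cancel)
        then have j4: "j = 4 * (j div 4)" using div_mult_mod_eq[of j 4] by simp
        have pos: "0 < j div 4" "j div 4 < j" using less.prems j4 by linarith+
        show ?thesis
        proof (cases "odd (j div 4)")
          case True
          then obtain t where t: "j div 4 = 2 * t + 1" using oddE by blast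
          have "j = 4 ^ 1 * (2 * (t + 1) - 1)" using t j4 by simp
          then show ?thesis by (metis le_add2 le_refl)
        next
          case False
          from less.IH[OF pos(2) pos(1)] False show ?thesis
          proof (elim disjE exE conjE)
            assume "odd (j div 4)" then show ?thesis using False by simp
          next
            fix a k assume "1 \<le> a" "1 \<le> k" "j div 4 = 4 ^ a * (2 * k - 1)"
            then have "1 \<le> Suc a" "j = 4 ^ Suc a * (2 * k - 1)" using j4 by auto
            then show ?thesis using \<open>1 \<le> k\<close> by blast
          next
            fix a k assume "1 \<le> k" "j div 4 = 4 ^ a * (8 * k - 6)"
            then have "j = 4 ^ Suc a * (8 * k - 6)" using j4 by auto
            then show ?thesis using \<open>1 \<le> k\<close> by blast
          next
            fix a k assume "1 \<le> k" "j div 4 = 4 ^ a * (8 * k - 2)"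
            then have "j = 4 ^ Suc a * (8 * k - 2)" using j4 by auto
            then show ?thesis using \<open>1 \<le> k\<close> by blast
          qed
        qed
      qed
    qed
  qed
qed

lemma bnd: assumes "4 ^ a * c < 2 * 4 ^ N" "(1::nat) \<le> c" shows "a \<le> N \<and> c < 2 * 4 ^ (N - a)"
proof -
  have aN: "a \<le> N"
  proof (rule ccontr)
    assume "\<not> a \<le> N"
    then have "(4::nat) ^ Suc N \<le> 4 ^ a" by (intro power_increasing) auto
    then have "4 * 4 ^ N \<le> 4 ^ a * c" using assms(2) by (simp add: order_trans[OF _ mult_le_mono2[of 1 c]] )
    then show False using assms(1) by simp
  qed
  have "(4::nat) ^ N = 4 ^ a * 4 ^ (N - a)" using aN by (simp add: power_add[symmetric])
  then have "4 ^ a * c < 4 ^ a * (2 * 4 ^ (N - a))" using assms(1) by simp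
  then show ?thesis using aN by simp
qed



lemma pow_split: "1 \<le> e \<Longrightarrow> (4::nat) ^ e = 4 * 4 ^ (e - 1)"
  by (cases e) auto

lemma odd21: "1 \<le> k \<Longrightarrow> odd (2 * k - 1::nat)" by (cases k) auto

lemma jlt: "j \<le> 2 * 4 ^ N - 1 \<Longrightarrow> j < 2 * (4::nat) ^ N"
proof -
  have "(1::nat) \<le> 4 ^ N" by simp
  then show "j \<le> 2 * 4 ^ N - 1 \<Longrightarrow> j < 2 * (4::nat) ^ N" by linarith
qed

lemma le_div2: "2 * l \<le> (m::nat) \<Longrightarrow> l \<le> m div 2" by presburger

lemma topT: assumes "1 \<le> j" "j \<le> 2 * 4 ^ (n - 2) - 1"
  shows "Lt False j = T \<longleftrightarrow> (\<exists>l k. 1 \<le> l \<and> l \<le> (n - 1) div 2 \<and> 1 \<le> k \<and> k \<le> 4 ^ (n - 2 * l - 1)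
             \<and> j = 4 ^ (2 * l - 1) * (2 * k - 1))"
proof
  assume LT: "Lt False j = T"
  have jl: "j < 2 * 4 ^ (n - 2)" using assms(2) by (rule jlt)
  from decomp[of j, OF order_less_le_trans[OF zero_less_one assms(1)]] show "\<exists>l k. 1 \<le> l \<and> l \<le> (n - 1) div 2 \<and> 1 \<le> k \<and> k \<le> 4 ^ (n - 2 * l - 1)
             \<and> j = 4 ^ (2 * l - 1) * (2 * k - 1)"
  proof (elim disjE exE conjE)
    assume "odd j" then show ?thesis using LT Lt_odd by simp
  next
    fix a k assume a1: "1 \<le> a" and k1: "1 \<le> k" and j: "j = 4 ^ a * (2 * k - 1)"
    have "odd (2 * k - 1)" using k1 by (rule odd21)
    then have oa: "odd a" using LT Lt_Tform[of "2*k-1" a False] a1 j by (auto split: if_splits)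
    have b: "a \<le> n - 2 \<and> 2 * k - 1 < 2 * 4 ^ (n - 2 - a)" using bnd[of a "2*k-1" "n-2"] jl j k1 by simp
    obtain t where t: "a = 2 * t + 1" using oa oddE by blast
    define l where "l = t + 1"
    have al: "a = 2 * l - 1" "1 \<le> l" using t unfolding l_def by simp_all
    have "n - 2 - a = n - 2 * l - 1" using al by simp
    then have "2 * k - 1 < 2 * 4 ^ (n - 2 * l - 1)" using b by simp
    then have "k \<le> 4 ^ (n - 2 * l - 1)" using k1 by linarith
    moreover have "l \<le> (n - 1) div 2" using b al by (intro le_div2) linarith
    ultimately show ?thesis using al k1 j by blast
  next
    fix a k assume "1 \<le> k" "j = 4 ^ a * (8 * k - 6)"
    then show ?thesis using LT Lt_Sform[of k False a] by (simp split: if_splits)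
  next
    fix a k assume "1 \<le> k" "j = 4 ^ a * (8 * k - 2)"
    then show ?thesis using LT Lt_Uform[of k False a] by (simp split: if_splits)
  qed
next
  assume "\<exists>l k. 1 \<le> l \<and> l \<le> (n - 1) div 2 \<and> 1 \<le> k \<and> k \<le> 4 ^ (n - 2 * l - 1)
             \<and> j = 4 ^ (2 * l - 1) * (2 * k - 1)"
  then obtain l k where "1 \<le> l" "1 \<le> k" "j = 4 ^ (2 * l - 1) * (2 * k - 1)" by blast
  moreover have "odd (2 * k - 1)" "odd (2 * l - 1)" "1 \<le> 2 * l - 1" using calculation odd21 by auto
  ultimately show "Lt False j = T" using Lt_Tform[of "2*k-1" "2*l-1" False] by simp
qed

lemma topP: assumes "1 \<le> j" "j \<le> 2 * 4 ^ (n - 2) - 1"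
  shows "Lt False j = P \<longleftrightarrow> (\<exists>k. 1 \<le> k \<and> k \<le> 4 ^ (n - 2) \<and> j = 2 * k - 1)"
proof -
  have "Lt False j = P \<longleftrightarrow> odd j"
  proof
    assume LP: "Lt False j = P"
    from decomp[of j, OF order_less_le_trans[OF zero_less_one assms(1)]] show "odd j"
    proof (elim disjE exE conjE)
      fix a k assume "1 \<le> a" "1 \<le> k" "j = 4 ^ a * (2 * k - 1)"
      then show ?thesis using LP Lt_Tform[of "2*k-1" a False] odd21 by (simp split: if_splits)
    next
      fix a k assume "1 \<le> k" "j = 4 ^ a * (8 * k - 6)"
      then show ?thesis using LP Lt_Sform[of k False a] by (simp split: if_splits)
    next
      fix a k assume "1 \<le> k" "j = 4 ^ a * (8 * k - 2)"
      then show ?thesis using LP Lt_Uform[of k False a] by (simp split: if_splits)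
    qed auto
  qed (rule Lt_odd)
  moreover have "odd j \<longleftrightarrow> (\<exists>k. 1 \<le> k \<and> k \<le> 4 ^ (n - 2) \<and> j = 2 * k - 1)"
  proof
    assume "odd j"
    then obtain t where t: "j = 2 * t + 1" using oddE by blast
    then show "\<exists>k. 1 \<le> k \<and> k \<le> 4 ^ (n - 2) \<and> j = 2 * k - 1" using assms(2)
      by (intro exI[of _ "t + 1"]) auto
  next
    assume "\<exists>k. 1 \<le> k \<and> k \<le> 4 ^ (n - 2) \<and> j = 2 * k - 1"
    then obtain k where "1 \<le> k" "j = 2 * k - 1" by blast
    then have "j = 2 * (k - 1) + 1" by simp
    then show "odd j" by simp
  qed
  ultimately show ?thesis by simp
qed

lemma bnd8: assumes "4 ^ a * (8 * k - c) < 2 * 4 ^ N" "1 \<le> k" "c \<le> (6::nat)"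
  shows "a + 1 \<le> N \<and> k \<le> 4 ^ (N - a - 1)"
proof -
  have c1: "1 \<le> 8 * k - c" using assms(2,3) by linarith
  from bnd[OF assms(1) c1] have b: "a \<le> N" "8 * k - c < 2 * 4 ^ (N - a)" by auto
  have e: "N - a \<noteq> 0"
  proof
    assume "N - a = 0"
    then show False using b(2) assms(2,3) by simp
  qed
  then have "(4::nat) ^ (N - a) = 4 * 4 ^ (N - a - 1)" by (intro pow_split) simp
  then have "8 * k - c < 8 * 4 ^ (N - a - 1)" using b(2) by simp
  then have "k \<le> 4 ^ (N - a - 1)" using assms(2,3) by linarith
  moreover have "a + 1 \<le> N" using e b(1) by simp
  ultimately show ?thesis by simp
qed

lemma topV: assumes "1 \<le> j" "j \<le> 2 * 4 ^ (n - 2) - 1"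
  shows "Lt False j = V \<longleftrightarrow> (\<exists>l k. 1 \<le> l \<and> l \<le> (n - 2) div 2 \<and> 1 \<le> k \<and> k \<le> 4 ^ (n - 2 * l - 2)
             \<and> j = 4 ^ (2 * l) * (2 * k - 1))"
proof
  assume LT: "Lt False j = V"
  have jl: "j < 2 * 4 ^ (n - 2)" using assms(2) by (rule jlt)
  from decomp[of j, OF order_less_le_trans[OF zero_less_one assms(1)]]
  show "\<exists>l k. 1 \<le> l \<and> l \<le> (n - 2) div 2 \<and> 1 \<le> k \<and> k \<le> 4 ^ (n - 2 * l - 2)
             \<and> j = 4 ^ (2 * l) * (2 * k - 1)"
  proof (elim disjE exE conjE)
    assume "odd j" then show ?thesis using LT Lt_odd by simp
  next
    fix a k assume a1: "1 \<le> a" and k1: "1 \<le> k" and j: "j = 4 ^ a * (2 * k - 1)"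
    have "odd (2 * k - 1)" using k1 by (rule odd21)
    then have oa: "even a" using LT Lt_Tform[of "2*k-1" a False] a1 j by (auto split: if_splits)
    have b: "a \<le> n - 2 \<and> 2 * k - 1 < 2 * 4 ^ (n - 2 - a)" using bnd[of a "2*k-1" "n-2"] jl j k1 by simp
    obtain l where t: "a = 2 * l" using oa evenE by blast
    have al: "1 \<le> l" using t a1 by simp
    have "n - 2 - a = n - 2 * l - 2" using t by simp
    then have "2 * k - 1 < 2 * 4 ^ (n - 2 * l - 2)" using b by simp
    then have "k \<le> 4 ^ (n - 2 * l - 2)" using k1 by linarith
    moreover have "l \<le> (n - 2) div 2" using b t by (intro le_div2) linarith
    ultimately show ?thesis using al k1 j t by blast
  next
    fix a k assume "1 \<le> k" "j = 4 ^ a * (8 * k - 6)"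
    then show ?thesis using LT Lt_Sform[of k False a] by (simp split: if_splits)
  next
    fix a k assume "1 \<le> k" "j = 4 ^ a * (8 * k - 2)"
    then show ?thesis using LT Lt_Uform[of k False a] by (simp split: if_splits)
  qed
next
  assume "\<exists>l k. 1 \<le> l \<and> l \<le> (n - 2) div 2 \<and> 1 \<le> k \<and> k \<le> 4 ^ (n - 2 * l - 2)
             \<and> j = 4 ^ (2 * l) * (2 * k - 1)"
  then obtain l k where "1 \<le> l" "1 \<le> k" "j = 4 ^ (2 * l) * (2 * k - 1)" by blast
  moreover have "odd (2 * k - 1)" "1 \<le> 2 * l" using calculation odd21 by auto
  ultimately show "Lt False j = V" using Lt_Tform[of "2*k-1" "2*l" False] by simp
qed

lemma topS: assumes "1 \<le> j" "j \<le> 2 * 4 ^ (n - 2) - 1"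
  shows "Lt False j = S \<longleftrightarrow>
             (\<exists>l k. 1 \<le> l \<and> l \<le> (n - 1) div 2 \<and> 1 \<le> k \<and> k \<le> 4 ^ (n - 2 * l - 1)
                \<and> j = 4 ^ (2 * l - 2) * (8 * k - 6))
           \<or> (\<exists>l k. 1 \<le> l \<and> l \<le> (n - 2) div 2 \<and> 1 \<le> k \<and> k \<le> 4 ^ (n - 2 * l - 2)
                \<and> j = 4 ^ (2 * l - 1) * (8 * k - 2))" (is "_ \<longleftrightarrow> ?A \<or> ?B")
proof
  assume LT: "Lt False j = S"
  have jl: "j < 2 * 4 ^ (n - 2)" using assms(2) by (rule jlt)
  from decomp[of j, OF order_less_le_trans[OF zero_less_one assms(1)]]
  show "?A \<or> ?B"
  proof (elim disjE exE conjE)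
    assume "odd j" then show ?thesis using LT Lt_odd by simp
  next
    fix a k assume a1: "1 \<le> a" and k1: "1 \<le> k" and j: "j = 4 ^ a * (2 * k - 1)"
    have "odd (2 * k - 1)" using k1 by (rule odd21)
    then show ?thesis using LT Lt_Tform[of "2*k-1" a False] a1 j by (auto split: if_splits)
  next
    fix a k assume k1: "1 \<le> k" and j: "j = 4 ^ a * (8 * k - 6)"
    have ea: "even a" using LT Lt_Sform[of k False a] k1 j by (auto split: if_splits)
    have b: "a + 1 \<le> n - 2 \<and> k \<le> 4 ^ (n - 2 - a - 1)" using bnd8[of a k 6 "n-2"] jl j k1 by simp
    obtain t where t: "a = 2 * t" using ea evenE by blast
    define l where "l = t + 1"
    have al: "a = 2 * l - 2" "1 \<le> l" using t unfolding l_def by simp_all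
    have "n - 2 - a - 1 = n - 2 * l - 1" using al by simp
    then have "k \<le> 4 ^ (n - 2 * l - 1)" using b by simp
    moreover have "l \<le> (n - 1) div 2" using b al by (intro le_div2) linarith
    ultimately have ?A using al k1 j by blast
    then show ?thesis by blast
  next
    fix a k assume k1: "1 \<le> k" and j: "j = 4 ^ a * (8 * k - 2)"
    have oa: "odd a" using LT Lt_Uform[of k False a] k1 j by (auto split: if_splits)
    have b: "a + 1 \<le> n - 2 \<and> k \<le> 4 ^ (n - 2 - a - 1)" using bnd8[of a k 2 "n-2"] jl j k1 by simp
    obtain t where t: "a = 2 * t + 1" using oa oddE by blast
    define l where "l = t + 1"
    have al: "a = 2 * l - 1" "1 \<le> l" using t unfolding l_def by simp_all
    have "n - 2 - a - 1 = n - 2 * l - 2" using al by simp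
    then have "k \<le> 4 ^ (n - 2 * l - 2)" using b by simp
    moreover have "l \<le> (n - 2) div 2" using b al by (intro le_div2) linarith
    ultimately have ?B using al k1 j by blast
    then show ?thesis by blast
  qed
next
  assume "?A \<or> ?B"
  then show "Lt False j = S"
  proof
    assume ?A
    then obtain l k where "1 \<le> l" "1 \<le> k" "j = 4 ^ (2 * l - 2) * (8 * k - 6)" by blast
    moreover have "even (2 * l - 2)" using calculation by auto
    ultimately show ?thesis using Lt_Sform[of k False "2*l-2"] by simp
  next
    assume ?B
    then obtain l k where "1 \<le> l" "1 \<le> k" "j = 4 ^ (2 * l - 1) * (8 * k - 2)" by blast
    moreover have "odd (2 * l - 1)" using calculation odd21 by auto
    ultimately show ?thesis using Lt_Uform[of k False "2*l-1"] by simp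
  qed
qed

lemma topU: assumes "1 \<le> j" "j \<le> 2 * 4 ^ (n - 2) - 1"
  shows "Lt False j = U \<longleftrightarrow>
             (\<exists>l k. 1 \<le> l \<and> l \<le> (n - 1) div 2 \<and> 1 \<le> k \<and> k \<le> 4 ^ (n - 2 * l - 1)
                \<and> j = 4 ^ (2 * l - 2) * (8 * k - 2))
           \<or> (\<exists>l k. 1 \<le> l \<and> l \<le> (n - 2) div 2 \<and> 1 \<le> k \<and> k \<le> 4 ^ (n - 2 * l - 2)
                \<and> j = 4 ^ (2 * l - 1) * (8 * k - 6))" (is "_ \<longleftrightarrow> ?A \<or> ?B")
proof
  assume LT: "Lt False j = U"
  have jl: "j < 2 * 4 ^ (n - 2)" using assms(2) by (rule jlt)
  from decomp[of j, OF order_less_le_trans[OF zero_less_one assms(1)]]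
  show "?A \<or> ?B"
  proof (elim disjE exE conjE)
    assume "odd j" then show ?thesis using LT Lt_odd by simp
  next
    fix a k assume a1: "1 \<le> a" and k1: "1 \<le> k" and j: "j = 4 ^ a * (2 * k - 1)"
    have "odd (2 * k - 1)" using k1 by (rule odd21)
    then show ?thesis using LT Lt_Tform[of "2*k-1" a False] a1 j by (auto split: if_splits)
  next
    fix a k assume k1: "1 \<le> k" and j: "j = 4 ^ a * (8 * k - 2)"
    have ea: "even a" using LT Lt_Uform[of k False a] k1 j by (auto split: if_splits)
    have b: "a + 1 \<le> n - 2 \<and> k \<le> 4 ^ (n - 2 - a - 1)" using bnd8[of a k 2 "n-2"] jl j k1 by simp
    obtain t where t: "a = 2 * t" using ea evenE by blast
    define l where "l = t + 1"
    have al: "a = 2 * l - 2" "1 \<le> l" using t unfolding l_def by simp_all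
    have "n - 2 - a - 1 = n - 2 * l - 1" using al by simp
    then have "k \<le> 4 ^ (n - 2 * l - 1)" using b by simp
    moreover have "l \<le> (n - 1) div 2" using b al by (intro le_div2) linarith
    ultimately have ?A using al k1 j by blast
    then show ?thesis by blast
  next
    fix a k assume k1: "1 \<le> k" and j: "j = 4 ^ a * (8 * k - 6)"
    have oa: "odd a" using LT Lt_Sform[of k False a] k1 j by (auto split: if_splits)
    have b: "a + 1 \<le> n - 2 \<and> k \<le> 4 ^ (n - 2 - a - 1)" using bnd8[of a k 6 "n-2"] jl j k1 by simp
    obtain t where t: "a = 2 * t + 1" using oa oddE by blast
    define l where "l = t + 1"
    have al: "a = 2 * l - 1" "1 \<le> l" using t unfolding l_def by simp_all
    have "n - 2 - a - 1 = n - 2 * l - 2" using al by simp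
    then have "k \<le> 4 ^ (n - 2 * l - 2)" using b by simp
    moreover have "l \<le> (n - 2) div 2" using b al by (intro le_div2) linarith
    ultimately have ?B using al k1 j by blast
    then show ?thesis by blast
  qed
next
  assume "?A \<or> ?B"
  then show "Lt False j = U"
  proof
    assume ?A
    then obtain l k where "1 \<le> l" "1 \<le> k" "j = 4 ^ (2 * l - 2) * (8 * k - 2)" by blast
    moreover have "even (2 * l - 2)" using calculation by auto
    ultimately show ?thesis using Lt_Uform[of k False "2*l-2"] by simp
  next
    assume ?B
    then obtain l k where "1 \<le> l" "1 \<le> k" "j = 4 ^ (2 * l - 1) * (8 * k - 6)" by blast
    moreover have "odd (2 * l - 1)" using calculation odd21 by auto
    ultimately show ?thesis using Lt_Sform[of k False "2*l-1"] by simp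
  qed
qed



lemma cnt_step: "count_list (Kw (Suc i)) x = 4 * count_list (Kw i) x
   + (if even i then (if x = S \<or> x = T \<or> x = U then 1 else 0) else (if x = U \<or> x = V \<or> x = S then 1 else 0))"
  by (cases x) (auto simp: Let_def)

lemma cntP: "count_list (Kw i) P = 4 ^ i"
  by (induction i) (simp_all del: Kw.simps add: cnt_step Kw.simps(1))

lemma cntS: "3 * count_list (Kw i) S + 1 = 4 ^ i"
  by (induction i) (simp_all del: Kw.simps add: cnt_step Kw.simps(1))

lemma cntU: "3 * count_list (Kw i) U + 1 = 4 ^ i"
  by (induction i) (simp_all del: Kw.simps add: cnt_step Kw.simps(1))

lemma cntTV: "15 * count_list (Kw (2 * q)) T + 4 = 4 ^ (2 * q + 1)
  \<and> 15 * count_list (Kw (2 * q + 1)) T + 1 = 4 ^ (2 * q + 2)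
  \<and> 15 * count_list (Kw (2 * q)) V + 1 = 4 ^ (2 * q)
  \<and> 15 * count_list (Kw (2 * q + 1)) V + 4 = 4 ^ (2 * q + 1)"
proof (induction q)
  case 0 then show ?case by (simp del: Kw.simps add: cnt_step Kw.simps(1))
next
  case (Suc q)
  have e1: "2 * Suc q = Suc (2 * q + 1)" "2 * Suc q + 1 = Suc (Suc (2 * q + 1))" by simp_all
  show ?case using Suc unfolding e1 by (simp del: Kw.simps add: cnt_step Kw.simps(1))
qed



lemma nat_real_div: "(d::nat) * a + c = b \<Longrightarrow> 0 < d \<Longrightarrow> real a = (real b - real c) / real d"
proof -
  assume h: "d * a + c = b" "0 < d"
  then have "real d * real a + real c = real b" by (metis of_nat_add of_nat_mult)
  then show ?thesis using h(2) by (simp add: field_simps)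
qed

theorem mainTheorem12:
  fixes n :: nat
  assumes "n \<ge> 2"
  shows "length (K n) = 2 * 4 ^ (n - 2) - 1
    \<and> (\<forall>j. 1 \<le> j \<and> j \<le> 2 * 4 ^ (n - 2) - 1 \<longrightarrow>
        (K n ! (j - 1) = P \<longleftrightarrow> (\<exists>k. 1 \<le> k \<and> k \<le> 4 ^ (n - 2) \<and> j = 2 * k - 1))
      \<and> (K n ! (j - 1) = T \<longleftrightarrow> (\<exists>l k. 1 \<le> l \<and> l \<le> (n - 1) div 2 \<and> 1 \<le> k \<and> k \<le> 4 ^ (n - 2 * l - 1)
             \<and> j = 4 ^ (2 * l - 1) * (2 * k - 1)))
      \<and> (K n ! (j - 1) = V \<longleftrightarrow> (\<exists>l k. 1 \<le> l \<and> l \<le> (n - 2) div 2 \<and> 1 \<le> k \<and> k \<le> 4 ^ (n - 2 * l - 2)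
             \<and> j = 4 ^ (2 * l) * (2 * k - 1)))
      \<and> (K n ! (j - 1) = S \<longleftrightarrow>
             (\<exists>l k. 1 \<le> l \<and> l \<le> (n - 1) div 2 \<and> 1 \<le> k \<and> k \<le> 4 ^ (n - 2 * l - 1)
                \<and> j = 4 ^ (2 * l - 2) * (8 * k - 6))
           \<or> (\<exists>l k. 1 \<le> l \<and> l \<le> (n - 2) div 2 \<and> 1 \<le> k \<and> k \<le> 4 ^ (n - 2 * l - 2)
                \<and> j = 4 ^ (2 * l - 1) * (8 * k - 2)))
      \<and> (K n ! (j - 1) = U \<longleftrightarrow>
             (\<exists>l k. 1 \<le> l \<and> l \<le> (n - 1) div 2 \<and> 1 \<le> k \<and> k \<le> 4 ^ (n - 2 * l - 1)
                \<and> j = 4 ^ (2 * l - 2) * (8 * k - 2))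
           \<or> (\<exists>l k. 1 \<le> l \<and> l \<le> (n - 2) div 2 \<and> 1 \<le> k \<and> k \<le> 4 ^ (n - 2 * l - 2)
                \<and> j = 4 ^ (2 * l - 1) * (8 * k - 6))))
    \<and> (\<forall>m::nat. n = 2 * m \<longrightarrow>
        real (count_list (K n) P) = 4 ^ (2 * m - 2)
      \<and> real (count_list (K n) V) = (4 ^ (2 * m - 2) - 1) / 15
      \<and> real (count_list (K n) T) = (4 ^ (2 * m - 1) - 4) / 15
      \<and> real (count_list (K n) S) = (4 ^ (2 * m - 2) - 1) / 3
      \<and> real (count_list (K n) U) = (4 ^ (2 * m - 2) - 1) / 3)
    \<and> (\<forall>m::nat. n = 2 * m + 1 \<longrightarrow>
        real (count_list (K n) P) = 4 ^ (2 * m - 1)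
      \<and> real (count_list (K n) V) = (4 ^ (2 * m - 1) - 4) / 15
      \<and> real (count_list (K n) T) = (4 ^ (2 * m) - 1) / 15
      \<and> real (count_list (K n) S) = (4 ^ (2 * m - 1) - 1) / 3
      \<and> real (count_list (K n) U) = (4 ^ (2 * m - 1) - 1) / 3)"
proof (intro conjI allI impI)
  show "length (K n) = 2 * 4 ^ (n - 2) - 1" by (simp add: K_def len_Kw)
next
  fix j :: nat assume j: "1 \<le> j \<and> j \<le> 2 * 4 ^ (n - 2) - 1"
  have "j - 1 < length (K n)" using j by (simp add: K_def len_Kw) linarith
  then have e: "K n ! (j - 1) = Lt False j" using j unfolding K_def by (simp add: Kw_nth)
  show "K n ! (j - 1) = P \<longleftrightarrow> (\<exists>k. 1 \<le> k \<and> k \<le> 4 ^ (n - 2) \<and> j = 2 * k - 1)"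
    unfolding e using j topP by blast
  show "K n ! (j - 1) = T \<longleftrightarrow> (\<exists>l k. 1 \<le> l \<and> l \<le> (n - 1) div 2 \<and> 1 \<le> k \<and> k \<le> 4 ^ (n - 2 * l - 1)
             \<and> j = 4 ^ (2 * l - 1) * (2 * k - 1))"
    unfolding e using j topT by blast
  show "K n ! (j - 1) = V \<longleftrightarrow> (\<exists>l k. 1 \<le> l \<and> l \<le> (n - 2) div 2 \<and> 1 \<le> k \<and> k \<le> 4 ^ (n - 2 * l - 2)
             \<and> j = 4 ^ (2 * l) * (2 * k - 1))"
    unfolding e using j topV by blast
  show "K n ! (j - 1) = S \<longleftrightarrow>
             (\<exists>l k. 1 \<le> l \<and> l \<le> (n - 1) div 2 \<and> 1 \<le> k \<and> k \<le> 4 ^ (n - 2 * l - 1)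
                \<and> j = 4 ^ (2 * l - 2) * (8 * k - 6))
           \<or> (\<exists>l k. 1 \<le> l \<and> l \<le> (n - 2) div 2 \<and> 1 \<le> k \<and> k \<le> 4 ^ (n - 2 * l - 2)
                \<and> j = 4 ^ (2 * l - 1) * (8 * k - 2))"
    unfolding e using j topS by blast
  show "K n ! (j - 1) = U \<longleftrightarrow>
             (\<exists>l k. 1 \<le> l \<and> l \<le> (n - 1) div 2 \<and> 1 \<le> k \<and> k \<le> 4 ^ (n - 2 * l - 1)
                \<and> j = 4 ^ (2 * l - 2) * (8 * k - 2))
           \<or> (\<exists>l k. 1 \<le> l \<and> l \<le> (n - 2) div 2 \<and> 1 \<le> k \<and> k \<le> 4 ^ (n - 2 * l - 2)
                \<and> j = 4 ^ (2 * l - 1) * (8 * k - 6))"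
    unfolding e using j topU by blast
next
  fix m assume nm: "n = 2 * m"
  define q where "q = m - 1"
  have e2: "2 * m - 2 = 2 * q" and e1: "2 * m - 1 = 2 * q + 1"
    using nm assms unfolding q_def by auto
  have Kq: "K n = Kw (2 * q)" unfolding K_def using nm e2 by simp
  have tv: "15 * count_list (Kw (2 * q)) T + 4 = 4 ^ (2 * q + 1)"
    "15 * count_list (Kw (2 * q)) V + 1 = 4 ^ (2 * q)" using cntTV[of q] by auto
  show "real (count_list (K n) P) = 4 ^ (2 * m - 2)" unfolding Kq e2 cntP by simp
  show "real (count_list (K n) V) = (4 ^ (2 * m - 2) - 1) / 15"
    unfolding Kq e2 using nat_real_div[OF tv(2)] by simp
  show "real (count_list (K n) T) = (4 ^ (2 * m - 1) - 4) / 15"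
    unfolding Kq e1 using nat_real_div[OF tv(1)] by simp
  show "real (count_list (K n) S) = (4 ^ (2 * m - 2) - 1) / 3"
    unfolding Kq e2 using nat_real_div[OF cntS[of "2*q"]] by simp
  show "real (count_list (K n) U) = (4 ^ (2 * m - 2) - 1) / 3"
    unfolding Kq e2 using nat_real_div[OF cntU[of "2*q"]] by simp
next
  fix m assume nm: "n = 2 * m + 1"
  define q where "q = m - 1"
  have e1: "2 * m - 1 = 2 * q + 1" and e2: "2 * m = 2 * q + 2"
    using nm assms unfolding q_def by auto
  have Kq: "K n = Kw (2 * q + 1)" unfolding K_def using nm e1 by simp
  have tv: "15 * count_list (Kw (2 * q + 1)) T + 1 = 4 ^ (2 * q + 2)"
    "15 * count_list (Kw (2 * q + 1)) V + 4 = 4 ^ (2 * q + 1)" using cntTV[of q] by auto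
  show "real (count_list (K n) P) = 4 ^ (2 * m - 1)" unfolding Kq e1 cntP by simp
  show "real (count_list (K n) V) = (4 ^ (2 * m - 1) - 4) / 15"
    unfolding Kq e1 using nat_real_div[OF tv(2)] by simp
  show "real (count_list (K n) T) = (4 ^ (2 * m) - 1) / 15"
    unfolding Kq e2 using nat_real_div[OF tv(1)] by simp
  show "real (count_list (K n) S) = (4 ^ (2 * m - 1) - 1) / 3"
    unfolding Kq e1 using nat_real_div[OF cntS[of "2*q+1"]] by simp
  show "real (count_list (K n) U) = (4 ^ (2 * m - 1) - 1) / 3"
    unfolding Kq e1 using nat_real_div[OF cntU[of "2*q+1"]] by simp
qed


end
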